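(* Let $H$ be a finite group, let $N$ be a subgroup of the center $Z(H)$, let $g \colon H \to H' = H/N$ be the canonical projection, and let $\psi \colon H \to \Gamma'$ be a homomorphism to an abelian group $\Gamma'$. Suppose $\ker g \cap \ker \psi = \{e\}$. Let $\mathcal{A}$ be an abelian subgroup of $H$ of the smallest possible index among abelian subgroups of $H$, and $\mathcal{A}'$ an abelian subgroup of $H'$ of the smallest possible index among abelian subgroups of $H'$. Then $[H : \mathcal{A}] = [H' : \mathcal{A}']$.
   Context: $e$ denotes the neutral element, $Z(H)$ the center of $H$, and $[A:B]$ the index of a subgroup $B$ in a group $A$. *)

theory Defs
  imports "HOL-Algebra.Algebra"
begin

definition center :: "('a, 'm) monoid_scheme \<Rightarrow> 'a set" where
  "center G = {z \<in> carrier G. \<forall>x \<in> carrier G. z \<otimes>\<^bsub>G\<^esub> x = x \<otimes>\<^bsub>G\<^esub> z}"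

definition abelian_subgroup :: "'a set \<Rightarrow> ('a, 'm) monoid_scheme \<Rightarrow> bool" where
  "abelian_subgroup A G \<longleftrightarrow> subgroup A G \<and> comm_group (G\<lparr>carrier := A\<rparr>)"

definition subgroup_index :: "('a, 'm) monoid_scheme \<Rightarrow> 'a set \<Rightarrow> nat" where
  "subgroup_index G A = card (rcosets\<^bsub>G\<^esub> A)"

definition min_index_abelian_subgroup :: "'a set \<Rightarrow> ('a, 'm) monoid_scheme \<Rightarrow> bool" where
  "min_index_abelian_subgroup A G \<longleftrightarrow> abelian_subgroup A G \<and>
     (\<forall>B. abelian_subgroup B G \<longrightarrow> subgroup_index G A \<le> subgroup_index G B)"

end

theory Submission imports Defs begin

lemma preimage_sub:
  fixes G (structure)
  assumes nN: "N \<lhd> G" and sB: "subgroup B' (G Mod N)"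
  shows "subgroup {x \<in> carrier G. N #>\<^bsub>G\<^esub> x \<in> B'} G"
proof -
  interpret normal N G by (rule nN)
  interpret Q: group "G Mod N" by (rule factorgroup_is_group)
  interpret gh: group_hom G "G Mod N" "\<lambda>x. N #> x"
    by (simp add: group_hom_axioms_def group_hom_def is_group Q.is_group r_coset_hom_Mod)
  interpret SB: subgroup B' "G Mod N" by (rule sB)
  show ?thesis
  proof (rule subgroupI)
    show "{x \<in> carrier G. N #> x \<in> B'} \<subseteq> carrier G" by auto
    show "{x \<in> carrier G. N #> x \<in> B'} \<noteq> {}"
      using gh.hom_one SB.one_closed by force
    fix a b assume a: "a \<in> {x \<in> carrier G. N #> x \<in> B'}" and b: "b \<in> {x \<in> carrier G. N #> x \<in> B'}"
    show "inv a \<in> {x \<in> carrier G. N #> x \<in> B'}"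
      using a gh.hom_inv SB.m_inv_closed by auto
    show "a \<otimes> b \<in> {x \<in> carrier G. N #> x \<in> B'}"
      using a b gh.hom_mult[of a b] SB.m_closed[of "N #> a" "N #> b"] by auto
  qed
qed

lemma preimage_index:
  fixes G (structure)
  assumes nN: "N \<lhd> G" and fin: "finite (carrier G)" and sB: "subgroup B' (G Mod N)"
  shows "subgroup_index G {x \<in> carrier G. N #>\<^bsub>G\<^esub> x \<in> B'} = subgroup_index (G Mod N) B'"
proof -
  define B where "B = {x \<in> carrier G. N #>\<^bsub>G\<^esub> x \<in> B'}"
  interpret normal N G by (rule nN)
  interpret Q: group "G Mod N" by (rule factorgroup_is_group)
  interpret gh: group_hom G "G Mod N" "\<lambda>x. N #> x"
    by (simp add: group_hom_axioms_def group_hom_def is_group Q.is_group r_coset_hom_Mod)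
  interpret SB: subgroup B' "G Mod N" by (rule sB)
  have sBG: "subgroup B G" unfolding B_def by (rule preimage_sub[OF nN sB])
  have NB: "N \<subseteq> B" unfolding B_def
    using coset_join2 subgroup_axioms SB.one_closed subset by auto
  have sNB: "subgroup N (G\<lparr>carrier := B\<rparr>)"
    by (rule subgroup_incl[OF subgroup_axioms sBG NB])
  have gB: "group (G\<lparr>carrier := B\<rparr>)" by (rule subgroup.subgroup_is_group[OF sBG is_group])
  have rc: "rcosets\<^bsub>G\<lparr>carrier := B\<rparr>\<^esub> N = B'"
  proof -
    have "rcosets\<^bsub>G\<lparr>carrier := B\<rparr>\<^esub> N = (\<lambda>x. N #> x) ` B"
      by (auto simp: RCOSETS_def r_coset_def)
    also have "\<dots> = B'"
    proof
      show "(\<lambda>x. N #> x) ` B \<subseteq> B'" unfolding B_def by auto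
      show "B' \<subseteq> (\<lambda>x. N #> x) ` B"
      proof
        fix Y assume Y: "Y \<in> B'"
        then have "Y \<in> carrier (G Mod N)" using SB.subset by auto
        then obtain g where g: "g \<in> carrier G" "Y = N #> g" by (auto simp: carrier_FactGroup)
        then show "Y \<in> (\<lambda>x. N #> x) ` B" unfolding B_def using Y by auto
      qed
    qed
    finally show ?thesis .
  qed
  have l1: "card B' * card N = card B"
    using group.lagrange[OF gB sNB] rc by (simp add: order_def)
  have l2: "card (rcosets B) * card B = order G" by (rule lagrange[OF sBG])
  have l3: "card (rcosets N) * card N = order G" by (rule lagrange[OF subgroup_axioms])
  have l4: "card (rcosets\<^bsub>G Mod N\<^esub> B') * card B' = card (rcosets N)"
    using Q.lagrange[OF sB] by (simp add: order_def FactGroup_def)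
  have fN: "finite N" using fin subset finite_subset by blast
  have oN: "\<one> \<in> N" using nN normal_imp_subgroup subgroup.one_closed by blast
  have pN: "card N > 0" using fN oN card_gt_0_iff by blast
  have fB': "finite B'" using fin SB.subset finite_subset
    by (metis carrier_FactGroup finite_imageI)
  have pB': "card B' > 0" using fB' SB.one_closed by (auto simp: card_gt_0_iff)
  have "card (rcosets B) * (card B' * card N) = card (rcosets\<^bsub>G Mod N\<^esub> B') * (card B' * card N)"
    using l1 l2 l3 l4 by (metis mult.assoc)
  then show ?thesis using pN pB' unfolding subgroup_index_def B_def[symmetric] by simp
qed


lemma index_mono:
  fixes G (structure)
  assumes "group G" "finite (carrier G)" "subgroup A G" "subgroup C G" "A \<subseteq> C"
  shows "subgroup_index G C \<le> subgroup_index G A"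
proof -
  interpret group G by fact
  have l1: "card (rcosets A) * card A = order G" by (rule lagrange[OF assms(3)])
  have l2: "card (rcosets C) * card C = order G" by (rule lagrange[OF assms(4)])
  have fC: "finite C" using assms(2,4) subgroup.subset finite_subset by blast
  have cA: "card A \<le> card C" using card_mono[OF fC assms(5)] .
  have oA: "\<one> \<in> A" using assms(3) subgroup.one_closed by blast
  have fA: "finite A" using fC assms(5) finite_subset by blast
  have pA: "card A > 0" using fA oA card_gt_0_iff by blast
  show ?thesis
  proof (rule ccontr)
    assume "\<not> ?thesis"
    then have "card (rcosets A) < card (rcosets C)" unfolding subgroup_index_def by simp
    then have "card (rcosets A) * card A < card (rcosets C) * card A"
      using pA by simp
    also have "\<dots> \<le> card (rcosets C) * card C" using cA by simp
    finally have "card (rcosets A) * card A < card (rcosets C) * card C" .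
    then show False using l1 l2 by simp
  qed
qed

theorem mainTheorem4:
  fixes H :: "('a, 'm) monoid_scheme" and \<Gamma> :: "('c, 'n) monoid_scheme"
    and N :: "'a set" and \<psi> :: "'a \<Rightarrow> 'c"
    and A :: "'a set" and A' :: "'a set set"
  assumes "group H" and "finite (carrier H)"
    and "subgroup N H" and "N \<subseteq> center H"
    and "comm_group \<Gamma>" and "\<psi> \<in> hom H \<Gamma>"
    and "kernel H (H Mod N) (\<lambda>x. N #>\<^bsub>H\<^esub> x) \<inter> kernel H \<Gamma> \<psi> = {\<one>\<^bsub>H\<^esub>}"
    and "min_index_abelian_subgroup A H"
    and "min_index_abelian_subgroup A' (H Mod N)"
  shows "subgroup_index H A = subgroup_index (H Mod N) A'"
proof -
  interpret G: group H by fact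
  interpret GA: comm_group \<Gamma> by fact
  have nN: "N \<lhd> H"
  proof (rule G.normalI[OF assms(3)], intro ballI)
    fix x assume x: "x \<in> carrier H"
    have "\<And>h. h \<in> N \<Longrightarrow> h \<otimes>\<^bsub>H\<^esub> x = x \<otimes>\<^bsub>H\<^esub> h"
      using assms(4) x unfolding center_def by blast
    then show "N #>\<^bsub>H\<^esub> x = x <#\<^bsub>H\<^esub> N"
      unfolding r_coset_def l_coset_def by auto
  qed
  interpret normal N H by (rule nN)
  interpret Q: group "H Mod N" by (rule factorgroup_is_group)
  interpret gh: group_hom H "H Mod N" "\<lambda>x. N #>\<^bsub>H\<^esub> x"
    by (simp add: group_hom_axioms_def group_hom_def G.is_group Q.is_group r_coset_hom_Mod)
  interpret gp: group_hom H \<Gamma> \<psi>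
    by (simp add: group_hom_axioms_def group_hom_def G.is_group GA.is_group assms(6))
  have kerN: "\<And>c. c \<in> carrier H \<Longrightarrow> N #>\<^bsub>H\<^esub> c = N \<Longrightarrow> \<psi> c = \<one>\<^bsub>\<Gamma>\<^esub> \<Longrightarrow> c = \<one>\<^bsub>H\<^esub>"
    using assms(7) unfolding kernel_def by auto
  have mA: "abelian_subgroup A H" "\<And>B. abelian_subgroup B H \<Longrightarrow> subgroup_index H A \<le> subgroup_index H B"
    using assms(8) unfolding min_index_abelian_subgroup_def by auto
  have mA': "abelian_subgroup A' (H Mod N)" "\<And>B. abelian_subgroup B (H Mod N) \<Longrightarrow> subgroup_index (H Mod N) A' \<le> subgroup_index (H Mod N) B"
    using assms(9) unfolding min_index_abelian_subgroup_def by auto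
  define B where "B = {x \<in> carrier H. N #>\<^bsub>H\<^esub> x \<in> A'}"
  have sA': "subgroup A' (H Mod N)" using mA'(1) unfolding abelian_subgroup_def by auto
  have cA': "comm_group ((H Mod N)\<lparr>carrier := A'\<rparr>)" using mA'(1) unfolding abelian_subgroup_def by auto
  have sB: "subgroup B H" unfolding B_def by (rule preimage_sub[OF nN sA'])
  have iB: "subgroup_index H B = subgroup_index (H Mod N) A'"
    unfolding B_def by (rule preimage_index[OF nN assms(2) sA'])
  have abB: "abelian_subgroup B H"
    unfolding abelian_subgroup_def
  proof (intro conjI sB group.group_comm_groupI)
    show "group (H\<lparr>carrier := B\<rparr>)" by (rule subgroup.subgroup_is_group[OF sB G.is_group])
    fix x y assume xy: "x \<in> carrier (H\<lparr>carrier := B\<rparr>)" "y \<in> carrier (H\<lparr>carrier := B\<rparr>)"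
    then have x: "x \<in> carrier H" "N #>\<^bsub>H\<^esub> x \<in> A'" and y: "y \<in> carrier H" "N #>\<^bsub>H\<^esub> y \<in> A'"
      unfolding B_def by auto
    have "(N #>\<^bsub>H\<^esub> x) <#>\<^bsub>H\<^esub> (N #>\<^bsub>H\<^esub> y) = (N #>\<^bsub>H\<^esub> y) <#>\<^bsub>H\<^esub> (N #>\<^bsub>H\<^esub> x)"
      using comm_monoid.m_comm[OF comm_group.axioms(1)[OF cA'], of "N #>\<^bsub>H\<^esub> x" "N #>\<^bsub>H\<^esub> y"] x y
      by simp
    then have e: "N #>\<^bsub>H\<^esub> (x \<otimes>\<^bsub>H\<^esub> y) = N #>\<^bsub>H\<^esub> (y \<otimes>\<^bsub>H\<^esub> x)"
      using gh.hom_mult x y by simp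
    define c where "c = (x \<otimes>\<^bsub>H\<^esub> y) \<otimes>\<^bsub>H\<^esub> inv\<^bsub>H\<^esub> (y \<otimes>\<^bsub>H\<^esub> x)"
    have cc: "c \<in> carrier H" unfolding c_def using x y by simp
    have "N #>\<^bsub>H\<^esub> c = (N #>\<^bsub>H\<^esub> (x \<otimes>\<^bsub>H\<^esub> y)) \<otimes>\<^bsub>H Mod N\<^esub> inv\<^bsub>H Mod N\<^esub> (N #>\<^bsub>H\<^esub> (y \<otimes>\<^bsub>H\<^esub> x))"
      unfolding c_def using x y gh.hom_mult gh.hom_inv by simp
    also have "\<dots> = \<one>\<^bsub>H Mod N\<^esub>" unfolding e
      by (rule Q.r_inv, rule gh.hom_closed, simp add: x y)
    finally have c1: "N #>\<^bsub>H\<^esub> c = N" by simp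
    have "\<psi> c = (\<psi> x \<otimes>\<^bsub>\<Gamma>\<^esub> \<psi> y) \<otimes>\<^bsub>\<Gamma>\<^esub> inv\<^bsub>\<Gamma>\<^esub> (\<psi> y \<otimes>\<^bsub>\<Gamma>\<^esub> \<psi> x)"
      unfolding c_def using x y gp.hom_mult gp.hom_inv by simp
    also have "\<dots> = \<one>\<^bsub>\<Gamma>\<^esub>" using x y GA.m_comm by simp
    finally have "c = \<one>\<^bsub>H\<^esub>" using kerN[OF cc c1] by simp
    then have "x \<otimes>\<^bsub>H\<^esub> y = y \<otimes>\<^bsub>H\<^esub> x" unfolding c_def using x y
      by (metis G.inv_solve_right G.l_one G.m_closed G.one_closed)
    then show "x \<otimes>\<^bsub>H\<lparr>carrier := B\<rparr>\<^esub> y = y \<otimes>\<^bsub>H\<lparr>carrier := B\<rparr>\<^esub> x" by simp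
  qed
  have le1: "subgroup_index H A \<le> subgroup_index (H Mod N) A'"
    using mA(2)[OF abB] iB by simp
  define C' where "C' = (\<lambda>x. N #>\<^bsub>H\<^esub> x) ` A"
  have sA: "subgroup A H" using mA(1) unfolding abelian_subgroup_def by auto
  have cA: "comm_group (H\<lparr>carrier := A\<rparr>)" using mA(1) unfolding abelian_subgroup_def by auto
  have sC': "subgroup C' (H Mod N)" unfolding C'_def by (rule gh.subgroup_img_is_subgroup[OF sA])
  have abC': "abelian_subgroup C' (H Mod N)"
    unfolding abelian_subgroup_def
  proof (intro conjI sC' group.group_comm_groupI)
    show "group ((H Mod N)\<lparr>carrier := C'\<rparr>)" by (rule subgroup.subgroup_is_group[OF sC' Q.is_group])
    fix U V assume XY: "U \<in> carrier ((H Mod N)\<lparr>carrier := C'\<rparr>)" "V \<in> carrier ((H Mod N)\<lparr>carrier := C'\<rparr>)"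
    then obtain a b where ab: "a \<in> A" "b \<in> A" "U = N #>\<^bsub>H\<^esub> a" "V = N #>\<^bsub>H\<^esub> b"
      unfolding C'_def by auto
    have ac: "a \<in> carrier H" "b \<in> carrier H" using ab sA subgroup.subset by blast+
    have "a \<otimes>\<^bsub>H\<^esub> b = b \<otimes>\<^bsub>H\<^esub> a"
      using comm_monoid.m_comm[OF comm_group.axioms(1)[OF cA], of a b] ab by simp
    then have "U \<otimes>\<^bsub>H Mod N\<^esub> V = V \<otimes>\<^bsub>H Mod N\<^esub> U"
      using ab ac gh.hom_mult by metis
    then show "U \<otimes>\<^bsub>(H Mod N)\<lparr>carrier := C'\<rparr>\<^esub> V = V \<otimes>\<^bsub>(H Mod N)\<lparr>carrier := C'\<rparr>\<^esub> U" by simp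
  qed
  define D where "D = {x \<in> carrier H. N #>\<^bsub>H\<^esub> x \<in> C'}"
  have sD: "subgroup D H" unfolding D_def by (rule preimage_sub[OF nN sC'])
  have iD: "subgroup_index H D = subgroup_index (H Mod N) C'"
    unfolding D_def by (rule preimage_index[OF nN assms(2) sC'])
  have AD: "A \<subseteq> D" unfolding D_def C'_def using sA subgroup.subset by blast
  have "subgroup_index H D \<le> subgroup_index H A"
    by (rule index_mono[OF G.is_group assms(2) sA sD AD])
  then have le2: "subgroup_index (H Mod N) A' \<le> subgroup_index H A"
    using mA'(2)[OF abC'] iD by simp
  show ?thesis using le1 le2 by simp
qed

end
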